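(* Let $s \ge 2$ and $q \ge 1$ be integers with $2(q-s)^2<s-1$. Then $R(s,q) \le s+2(q-s)+2(q-s)^2$.
   Context: Let $Z_s$ be the ring of integers modulo $s$. A family $\mathcal{F} \subseteq Z_s^q$ is covering if for every ordered pair of distinct vectors $u,v \in \mathcal{F}$ and every $a \in Z_s$ there is a coordinate $i$ with $u_i - v_i = a$. $R(s,q)$ denotes the maximum possible cardinality of a covering family in $Z_s^q$. *)

theory Defs
  imports Main
begin

text \<open>Vectors of Z_s^q are represented as functions nat => int with entries in
  {0..<s} at coordinates i < q and 0 at all other coordinates (canonical representatives).\<close>

definition Zvecs :: "nat \<Rightarrow> nat \<Rightarrow> (nat \<Rightarrow> int) set" where
  "Zvecs s q = {u. (\<forall>i<q. 0 \<le> u i \<and> u i < int s) \<and> (\<forall>i\<ge>q. u i = 0)}"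

definition covering :: "nat \<Rightarrow> nat \<Rightarrow> (nat \<Rightarrow> int) set \<Rightarrow> bool" where
  "covering s q F \<longleftrightarrow> F \<subseteq> Zvecs s q \<and>
     (\<forall>u\<in>F. \<forall>v\<in>F. u \<noteq> v \<longrightarrow>
        (\<forall>a::int. 0 \<le> a \<and> a < int s \<longrightarrow> (\<exists>i<q. (u i - v i) mod int s = a)))"

definition R :: "nat \<Rightarrow> nat \<Rightarrow> nat" where
  "R s q = Max {card F | F. covering s q F}"

end

theory Submission
  imports Defs
begin


lemma cs_int:
  fixes x :: "'a \<Rightarrow> int"
  assumes "finite A"
  shows "(\<Sum>a\<in>A. x a)^2 \<le> int (card A) * (\<Sum>a\<in>A. (x a)^2)"
proof -
  have "0 \<le> (\<Sum>a\<in>A. \<Sum>b\<in>A. (x a - x b)^2)" by (intro sum_nonneg) auto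
  also have "\<dots> = (\<Sum>a\<in>A. \<Sum>b\<in>A. (x a)^2 + (x b)^2 - 2 * x a * x b)"
    by (simp add: power2_diff)
  also have "\<dots> = 2 * int (card A) * (\<Sum>a\<in>A. (x a)^2) - 2 * (\<Sum>a\<in>A. x a)^2"
    by (simp add: sum.distrib sum_subtractf sum_distrib_left sum_distrib_right power2_eq_square
        algebra_simps)
  finally show ?thesis by simp
qed

lemma cs_nat:
  fixes x :: "'a \<Rightarrow> nat"
  assumes "finite A"
  shows "(\<Sum>a\<in>A. x a)^2 \<le> card A * (\<Sum>a\<in>A. (x a)^2)"
proof -
  have "int ((\<Sum>a\<in>A. x a)^2) \<le> int (card A * (\<Sum>a\<in>A. (x a)^2))"
    using cs_int[OF assms, of "\<lambda>a. int (x a)"] by simp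
  then show ?thesis by linarith
qed

lemma sq_sum_nat:
  fixes x :: "'a \<Rightarrow> nat"
  assumes "finite A"
  shows "(\<Sum>a\<in>A. (x a)^2) \<le> (\<Sum>a\<in>A. x a)^2"
  using assms
proof (induction A rule: finite_induct)
  case (insert b A)
  then show ?case by (simp add: power2_sum)
qed simp

lemma fiber_sq:
  fixes f :: "'a \<Rightarrow> 'b"
  assumes "finite I" "finite A" "f ` I \<subseteq> A"
  shows "(\<Sum>i\<in>I. \<Sum>j\<in>I. of_bool (f i = f j) :: nat) = (\<Sum>a\<in>A. (card {i\<in>I. f i = a})^2)"
proof -
  have "(\<Sum>i\<in>I. \<Sum>j\<in>I. of_bool (f i = f j) :: nat) = (\<Sum>i\<in>I. card {j\<in>I. f j = f i})"
    using assms(1) by (intro sum.cong) (auto intro: arg_cong[where f=card])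
  also have "\<dots> = (\<Sum>a\<in>A. \<Sum>i\<in>{i. i\<in>I \<and> f i = a}. card {j\<in>I. f j = f i})"
    using sum.group[OF assms, of "\<lambda>i. card {j\<in>I. f j = f i}"] by simp
  also have "\<dots> = (\<Sum>a\<in>A. \<Sum>i\<in>{i. i\<in>I \<and> f i = a}. card {j\<in>I. f j = a})"
    by (intro sum.cong) auto
  also have "\<dots> = (\<Sum>a\<in>A. (card {i\<in>I. f i = a})^2)"
    by (simp add: power2_eq_square)
  finally show ?thesis .
qed

lemma fiber_card:
  fixes f :: "'a \<Rightarrow> 'b"
  assumes "finite I" "finite A" "f ` I \<subseteq> A"
  shows "(\<Sum>a\<in>A. card {i\<in>I. f i = a}) = card I"
  using sum.group[OF assms, of "\<lambda>_. 1::nat"] by simp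



lemma pair_bound:
  fixes f :: "nat \<Rightarrow> int" and s q :: nat
  assumes cov: "\<And>a. 0 \<le> a \<Longrightarrow> a < int s \<Longrightarrow> \<exists>i<q. f i = a"
    and rng: "\<And>i. i < q \<Longrightarrow> 0 \<le> f i \<and> f i < int s"
  shows "s \<le> q \<and> (\<Sum>i<q. \<Sum>j<q. of_bool (f i = f j) :: nat) \<le> s + 2 * (q - s) + (q - s)^2"
proof -
  let ?A = "{0..<int s}"
  define N where "N a = card {i\<in>{..<q}. f i = a}" for a
  have sub: "f ` {..<q} \<subseteq> ?A" using rng by auto
  have N1: "N a \<ge> 1" if aA: "a \<in> ?A" for a
  proof -
    obtain i where "i < q" "f i = a" using cov[of a] aA by auto
    then have "{i\<in>{..<q}. f i = a} \<noteq> {}" by auto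
    then show ?thesis unfolding N_def by (simp add: Suc_le_eq card_gt_0_iff)
  qed
  have sumN: "(\<Sum>a\<in>?A. N a) = q" unfolding N_def using fiber_card[OF _ _ sub] by simp
  define x where "x a = N a - 1" for a
  have Nx: "N a = x a + 1" if "a \<in> ?A" for a using N1[OF that] unfolding x_def by simp
  have cA: "card ?A = s" by simp
  have "(\<Sum>a\<in>?A. N a) = (\<Sum>a\<in>?A. x a) + s"
  proof -
    have "(\<Sum>a\<in>?A. N a) = (\<Sum>a\<in>?A. x a + 1)" using Nx by (intro sum.cong) auto
    also have "\<dots> = (\<Sum>a\<in>?A. x a) + s" by (simp only: sum.distrib) simp
    finally show ?thesis .
  qed
  then have sx: "(\<Sum>a\<in>?A. x a) = q - s" "s \<le> q" using sumN by auto
  have "(\<Sum>i<q. \<Sum>j<q. of_bool (f i = f j) :: nat) = (\<Sum>a\<in>?A. (N a)^2)"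
    unfolding N_def using fiber_sq[OF _ _ sub] by simp
  also have "\<dots> = (\<Sum>a\<in>?A. (x a)^2 + 2 * x a + 1)"
    using Nx by (intro sum.cong) (auto simp: power2_eq_square algebra_simps)
  also have "\<dots> = (\<Sum>a\<in>?A. (x a)^2) + 2 * (\<Sum>a\<in>?A. x a) + s"
    by (simp only: sum.distrib sum_distrib_left[symmetric]) simp
  also have "\<dots> \<le> (\<Sum>a\<in>?A. x a)^2 + 2 * (\<Sum>a\<in>?A. x a) + s"
    using sq_sum_nat[of ?A x] by simp
  finally show ?thesis using sx by simp
qed


lemma final_arith:
  fixes s d m :: int
  assumes s2: "s \<ge> 2" and d0: "d \<ge> 0" and m2: "m \<ge> 2"
    and hd: "2 * d^2 < s - 1"
    and key: "m * (s * (s+d) + (s+d) * (s+d-1)) \<le> s * ((s+d)^2 + (m-1) * (s + 2*d + d^2))"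
  shows "m \<le> s + 2*d + 2*d^2"
proof (rule ccontr)
  assume "\<not> ?thesis"
  then have mB: "m \<ge> s + 2*d + 2*d^2 + 1" by simp
  have e: "m * (s * (s+d) + (s+d) * (s+d-1)) - s * ((s+d)^2 + (m-1) * (s + 2*d + d^2))
     = (s - 1) * (m * (s + d - d^2) - s * (s + 2*d))"
    by (simp add: algebra_simps power2_eq_square)
  have pos: "s + d - d^2 > 0" using hd d0 by (smt (verit) zero_le_power2)
  have "m * (s + d - d^2) \<ge> (s + 2*d + 2*d^2 + 1) * (s + d - d^2)"
    using mB pos by (intro mult_right_mono) auto
  moreover have "(s + 2*d + 2*d^2 + 1) * (s + d - d^2) - s * (s + 2*d)
     = d * (s + s*d + 2*d - 2*d^3) + (s + d - d^2)"
    by (simp add: algebra_simps power2_eq_square power3_eq_cube)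
  moreover have "s + s*d + 2*d - 2*d^3 \<ge> 0"
  proof -
    have "s * (1 + d) \<ge> (2*d^2) * (1 + d)" using hd d0 by (intro mult_right_mono) auto
    then show ?thesis using d0 by (simp add: algebra_simps power2_eq_square power3_eq_cube) (smt (verit) mult_nonneg_nonneg)
  qed
  ultimately have "m * (s + d - d^2) - s * (s + 2*d) > 0"
    using pos d0 by (smt (verit) mult_nonneg_nonneg)
  then have "(s - 1) * (m * (s + d - d^2) - s * (s + 2*d)) > 0" using s2 by simp
  then show False using key e by linarith
qed

lemma B_ge: "int s \<le> int s + 2 * (int q - int s) + 2 * (int q - int s)^2"
proof -
  have "0 \<le> (int q - int s) * (int q - int s + 1)"
    by (cases "int q - int s \<ge> 0") (auto intro: mult_nonneg_nonneg mult_nonpos_nonpos)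
  then show ?thesis by (simp add: power2_eq_square algebra_simps)
qed

lemma covering_bound:
  fixes s q :: nat
  assumes s2: "s \<ge> 2" and hd: "2 * (int q - int s)^2 < int s - 1"
    and cov: "covering s q F"
  shows "int (card F) \<le> int s + 2 * (int q - int s) + 2 * (int q - int s)^2"
proof -
  have B0: "int s \<le> int s + 2 * (int q - int s) + 2 * (int q - int s)^2"
    by (rule B_ge)
  show ?thesis
  proof (cases "finite F \<and> card F \<ge> 2")
    case False
    then have "card F \<le> 1" by auto
    then show ?thesis using B0 s2 by linarith
  next
    case True
    then have finF: "finite F" and m2: "card F \<ge> 2" by auto
    define m where "m = card F"
    have sub: "F \<subseteq> Zvecs s q" and cv: "\<And>u v a. u \<in> F \<Longrightarrow> v \<in> F \<Longrightarrow> u \<noteq> v \<Longrightarrow> 0 \<le> a \<Longrightarrow> a < int s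
        \<Longrightarrow> \<exists>i<q. (u i - v i) mod int s = a"
      using cov unfolding covering_def by auto
    have spos: "int s > 0" using s2 by simp
    define P where "P u v i j \<longleftrightarrow> (u i - v i) mod int s = (u j - v j) mod int s"
      for u v :: "nat \<Rightarrow> int" and i j
    define h where "h u v = (\<Sum>i<q. \<Sum>j<q. of_bool (P u v i j) :: nat)" for u v
    define T where "T = s + 2 * (q - s) + (q - s)^2"
    have pb: "s \<le> q \<and> h u v \<le> T" if "u \<in> F" "v \<in> F" "u \<noteq> v" for u v
      unfolding h_def P_def T_def
      by (rule pair_bound[of s q "\<lambda>i. (u i - v i) mod int s"]) (use cv[OF that] spos in auto)
    have "\<not> (\<forall>a\<in>F. \<forall>b\<in>F. a = b)" using m2 card_le_Suc0_iff_eq[OF finF] by simp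
    then obtain u0 v0 where "u0 \<in> F" "v0 \<in> F" "u0 \<noteq> v0" by blast
    then have sq: "s \<le> q" using pb by blast
    have huu: "h u u = q^2" for u unfolding h_def P_def by (simp add: power2_eq_square)
    define S where "S = (\<Sum>u\<in>F. \<Sum>v\<in>F. h u v)"
    have upper: "S \<le> m * (q^2 + (m - 1) * T)"
    proof -
      have "(\<Sum>v\<in>F. h u v) \<le> q^2 + (m - 1) * T" if uF: "u \<in> F" for u
      proof -
        have "(\<Sum>v\<in>F. h u v) = h u u + (\<Sum>v\<in>F - {u}. h u v)"
          using sum.remove[OF finF uF] by simp
        also have "(\<Sum>v\<in>F - {u}. h u v) \<le> card (F - {u}) * T"
          using sum_bounded_above[of "F - {u}" "h u" T] pb uF by auto
        finally show ?thesis using huu uF finF unfolding m_def by simp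
      qed
      then have "S \<le> card F * (q^2 + (m - 1) * T)" unfolding S_def
        using sum_bounded_above[of F "\<lambda>u. \<Sum>v\<in>F. h u v" "q^2 + (m - 1) * T"] by auto
      then show ?thesis unfolding m_def .
    qed
    define g where "g i j u = (u i - u j) mod int s" for i j and u :: "nat \<Rightarrow> int"
    define X where "X i j = (\<Sum>u\<in>F. \<Sum>v\<in>F. of_bool (g i j u = g i j v) :: nat)" for i j
    have PX: "P u v i j \<longleftrightarrow> g i j u = g i j v" for u v i j
    proof -
      have "P u v i j \<longleftrightarrow> int s dvd (u i - v i) - (u j - v j)"
        unfolding P_def by (rule mod_eq_dvd_iff)
      also have "\<dots> \<longleftrightarrow> int s dvd (u i - u j) - (v i - v j)"
        by (simp add: algebra_simps)
      also have "\<dots> \<longleftrightarrow> g i j u = g i j v"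
        unfolding g_def by (rule mod_eq_dvd_iff[symmetric])
      finally show ?thesis .
    qed
    have SX: "S = (\<Sum>i<q. \<Sum>j<q. X i j)"
    proof -
      have "S = (\<Sum>u\<in>F. \<Sum>v\<in>F. \<Sum>i<q. \<Sum>j<q. of_bool (g i j u = g i j v) :: nat)"
        unfolding S_def h_def PX ..
      also have "\<dots> = (\<Sum>u\<in>F. \<Sum>i<q. \<Sum>v\<in>F. \<Sum>j<q. of_bool (g i j u = g i j v) :: nat)"
        by (intro sum.cong refl sum.swap)
      also have "\<dots> = (\<Sum>i<q. \<Sum>u\<in>F. \<Sum>v\<in>F. \<Sum>j<q. of_bool (g i j u = g i j v) :: nat)"
        by (rule sum.swap)
      also have "\<dots> = (\<Sum>i<q. \<Sum>u\<in>F. \<Sum>j<q. \<Sum>v\<in>F. of_bool (g i j u = g i j v) :: nat)"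
        by (intro sum.cong refl sum.swap)
      also have "\<dots> = (\<Sum>i<q. \<Sum>j<q. \<Sum>u\<in>F. \<Sum>v\<in>F. of_bool (g i j u = g i j v) :: nat)"
        by (intro sum.cong refl sum.swap)
      finally show ?thesis unfolding X_def .
    qed
    have Xii: "X i i = m^2" for i unfolding X_def g_def m_def by (simp add: power2_eq_square)
    have Xlow: "s * X i j \<ge> m^2" for i j
    proof -
      have gs: "g i j ` F \<subseteq> {0..<int s}" unfolding g_def using spos by auto
      have "X i j = (\<Sum>c\<in>{0..<int s}. (card {u\<in>F. g i j u = c})^2)"
        unfolding X_def by (rule fiber_sq[OF finF _ gs]) simp
      moreover have "m = (\<Sum>c\<in>{0..<int s}. card {u\<in>F. g i j u = c})"
        unfolding m_def by (rule fiber_card[OF finF _ gs, symmetric]) simp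
      ultimately show ?thesis using cs_nat[of "{0..<int s}" "\<lambda>c. card {u\<in>F. g i j u = c}"] by simp
    qed
    have lower: "s * S \<ge> q * (s * m^2 + (q - 1) * m^2)"
    proof -
      have "s * (\<Sum>j<q. X i j) \<ge> s * m^2 + (q - 1) * m^2" if iq: "i < q" for i
      proof -
        have "s * (\<Sum>j<q. X i j) = s * X i i + (\<Sum>j\<in>{..<q} - {i}. s * X i j)"
          using sum.remove[of "{..<q}" i "X i"] iq by (simp add: sum_distrib_left algebra_simps)
        moreover have "(\<Sum>j\<in>{..<q} - {i}. s * X i j) \<ge> card ({..<q} - {i}) * m^2"
          using sum_bounded_below[of "{..<q} - {i}" "m^2" "\<lambda>j. s * X i j"] Xlow by auto
        ultimately show ?thesis using iq Xii by simp
      qed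
      then have "(\<Sum>i<q. s * (\<Sum>j<q. X i j)) \<ge> card {..<q} * (s * m^2 + (q - 1) * m^2)"
        using sum_bounded_below[of "{..<q}" "s * m^2 + (q - 1) * m^2" "\<lambda>i. s * (\<Sum>j<q. X i j)"] by auto
      then show ?thesis unfolding SX by (simp add: sum_distrib_left)
    qed
    have m0: "m > 0" using m2 unfolding m_def by simp
    have "m * (m * (s * q + q * (q - 1))) \<le> m * (s * (q^2 + (m - 1) * T))"
    proof -
      have "m * (m * (s * q + q * (q - 1))) = q * (s * m^2 + (q - 1) * m^2)"
        by (simp add: power2_eq_square algebra_simps)
      also have "\<dots> \<le> s * S" by (rule lower)
      also have "\<dots> \<le> s * (m * (q^2 + (m - 1) * T))" using upper by simp
      finally show ?thesis by (simp add: algebra_simps)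
    qed
    then have key: "m * (s * q + q * (q - 1)) \<le> s * (q^2 + (m - 1) * T)"
      using m0 by simp
    define d where "d = q - s"
    have qd: "q = s + d" using sq unfolding d_def by simp
    have keyi: "int m * (int s * (int s + int d) + (int s + int d) * (int s + int d - 1))
        \<le> int s * ((int s + int d)^2 + (int m - 1) * (int s + 2 * int d + (int d)^2))"
    proof -
      have "int (m * (s * q + q * (q - 1))) \<le> int (s * (q^2 + (m - 1) * T))"
        using key by (simp only: of_nat_le_iff)
      then show ?thesis using m0 s2 unfolding T_def qd by (simp add: of_nat_diff)
    qed
    have "int m \<le> int s + 2 * int d + 2 * (int d)^2"
      by (rule final_arith[OF _ _ _ _ keyi]) (use s2 m2 hd qd in \<open>auto simp: m_def\<close>)
    then show ?thesis unfolding m_def using qd by simp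
  qed
qed

theorem proposition4p2:
  fixes s q :: nat
  assumes "s \<ge> 2" and "q \<ge> 1"
    and "2 * (int q - int s)^2 < int s - 1"
  shows "int (R s q) \<le> int s + 2 * (int q - int s) + 2 * (int q - int s)^2"
proof -
  define B where "B = int s + 2 * (int q - int s) + 2 * (int q - int s)^2"
  have bnd: "\<And>F. covering s q F \<Longrightarrow> card F \<le> nat B"
    using covering_bound[OF assms(1) assms(3)] unfolding B_def by fastforce
  have ne: "covering s q {}" unfolding covering_def by simp
  have fin: "finite {card F | F. covering s q F}"
    by (rule finite_subset[of _ "{..nat B}"]) (use bnd in auto)
  have "R s q \<le> nat B" unfolding R_def
    using fin ne bnd by (intro Max.boundedI) auto
  moreover have "B \<ge> 0" unfolding B_def using B_ge[of s q] by linarith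
  ultimately show ?thesis unfolding B_def by linarith
qed

end
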